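(* For every positive integer $m$ and every nonempty proper subset $S\subseteq[n]$ there is a two-outcome projective measurement $\{\Pi_S,\overline{\Pi}_S\}$ on $2m$ copies of an $n$-qubit system with the following property. Let $C\subseteq[n]$ be nonempty proper and let $\ket{\psi}=\ket{a}_C\otimes\ket{b}_{\overline{C}}$, where $\ket{a}_C$ and $\ket{b}_{\overline{C}}$ are each $\epsilon$-far from every multipartite product state. If $\ket{\psi}^{\otimes 2m}$ is measured with $\{\Pi_S,\overline{\Pi}_S\}$, then the outcome $\Pi_S$ ("accept") occurs with probability $1$ if $S=C$ or $S=\overline{C}$, and with probability at most $\exp(-\epsilon^2 m/2)$ if $S\ne C,\overline{C}$.
   Context: A state on a set $Q$ of qubits is multipartite product if it equals $\ket{a'}_D\otimes\ket{b'}_{Q\setminus D}$ for some nonempty proper $D\subsetneq Q$; a pure state $\ket{\phi}$ is $\epsilon$-far from a set $\mathcal{P}$ if $|\langle\phi|\chi\rangle|^2\le1-\epsilon^2$ for all $\ket{\chi}\in\mathcal{P}$. $\overline{C}=[n]\setminus C$. *)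

theory Defs
  imports Complex_Main "HOL-Library.FuncSet"
begin

text \<open>Qubits are labelled by natural numbers; the n-qubit system uses labels [n] = {1..n}.
  A computational basis state of a set Q of qubits is an extensional assignment
  Q -> bool. A (pure) state vector on Q is a function from such assignments to complex
  amplitudes; only its values on the basis of Q are relevant.\<close>

definition qbasis :: "nat set \<Rightarrow> (nat \<Rightarrow> bool) set" where
  "qbasis Q = PiE Q (\<lambda>_. UNIV)"

definition qinner :: "nat set \<Rightarrow> ((nat \<Rightarrow> bool) \<Rightarrow> complex) \<Rightarrow> ((nat \<Rightarrow> bool) \<Rightarrow> complex) \<Rightarrow> complex" where
  "qinner Q u v = (\<Sum>x\<in>qbasis Q. cnj (u x) * v x)"

definition unit_state :: "nat set \<Rightarrow> ((nat \<Rightarrow> bool) \<Rightarrow> complex) \<Rightarrow> bool" where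
  "unit_state Q v \<longleftrightarrow> (\<Sum>x\<in>qbasis Q. (cmod (v x))\<^sup>2) = 1"

definition qtensor :: "nat set \<Rightarrow> nat set \<Rightarrow> ((nat \<Rightarrow> bool) \<Rightarrow> complex) \<Rightarrow> ((nat \<Rightarrow> bool) \<Rightarrow> complex) \<Rightarrow> ((nat \<Rightarrow> bool) \<Rightarrow> complex)" where
  "qtensor D E a b = (\<lambda>x. a (restrict x D) * b (restrict x E))"

definition mp_product :: "nat set \<Rightarrow> ((nat \<Rightarrow> bool) \<Rightarrow> complex) \<Rightarrow> bool" where
  "mp_product Q chi \<longleftrightarrow> unit_state Q chi \<and>
     (\<exists>D a' b'. D \<noteq> {} \<and> D \<subset> Q \<and> unit_state D a' \<and> unit_state (Q - D) b' \<and>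
        (\<forall>x\<in>qbasis Q. chi x = qtensor D (Q - D) a' b' x))"

definition far_from_mp :: "nat set \<Rightarrow> real \<Rightarrow> ((nat \<Rightarrow> bool) \<Rightarrow> complex) \<Rightarrow> bool" where
  "far_from_mp Q eps phi \<longleftrightarrow>
     (\<forall>chi. mp_product Q chi \<longrightarrow> (cmod (qinner Q phi chi))\<^sup>2 \<le> 1 - eps\<^sup>2)"

definition copies_basis :: "nat \<Rightarrow> nat set \<Rightarrow> (nat \<Rightarrow> nat \<Rightarrow> bool) set" where
  "copies_basis k Q = PiE {..<k} (\<lambda>_. qbasis Q)"

definition tensor_power :: "nat \<Rightarrow> ((nat \<Rightarrow> bool) \<Rightarrow> complex) \<Rightarrow> ((nat \<Rightarrow> nat \<Rightarrow> bool) \<Rightarrow> complex)" where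
  "tensor_power k psi = (\<lambda>X. \<Prod>i<k. psi (X i))"

text \<open>An operator on the k-copy space is a matrix indexed by the basis. The pair
  {Pi, I - Pi} is a two-outcome projective measurement iff Pi is an orthogonal projector.\<close>
definition projector :: "(nat \<Rightarrow> nat \<Rightarrow> bool) set \<Rightarrow> ((nat \<Rightarrow> nat \<Rightarrow> bool) \<Rightarrow> (nat \<Rightarrow> nat \<Rightarrow> bool) \<Rightarrow> complex) \<Rightarrow> bool" where
  "projector B P \<longleftrightarrow>
     (\<forall>x\<in>B. \<forall>y\<in>B. P x y = cnj (P y x)) \<and>
     (\<forall>x\<in>B. \<forall>z\<in>B. (\<Sum>y\<in>B. P x y * P y z) = P x z)"

definition outcome_prob :: "(nat \<Rightarrow> nat \<Rightarrow> bool) set \<Rightarrow> ((nat \<Rightarrow> nat \<Rightarrow> bool) \<Rightarrow> (nat \<Rightarrow> nat \<Rightarrow> bool) \<Rightarrow> complex) \<Rightarrow> ((nat \<Rightarrow> nat \<Rightarrow> bool) \<Rightarrow> complex) \<Rightarrow> real" where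
  "outcome_prob B P phi = Re (\<Sum>x\<in>B. \<Sum>y\<in>B. cnj (phi x) * P x y * phi y)"

end

theory Submission
  imports Defs "HOL-Analysis.Convex"
begin

definition mg :: "nat set \<Rightarrow> (nat \<Rightarrow> bool) \<Rightarrow> (nat \<Rightarrow> bool) \<Rightarrow> (nat \<Rightarrow> bool)" where
  "mg S u w = (\<lambda>j. if j \<in> S then w j else u j)"

definition jn :: "nat set \<Rightarrow> (nat \<Rightarrow> bool) \<Rightarrow> (nat \<Rightarrow> bool) \<Rightarrow> (nat \<Rightarrow> bool)" where
  "jn D u v = (\<lambda>j. if j \<in> D then u j else v j)"

lemma finite_qbasis: "finite Q \<Longrightarrow> finite (qbasis Q)"
  unfolding qbasis_def by (intro finite_PiE) auto

lemma qbasis_undef: "x \<in> qbasis Q \<Longrightarrow> j \<notin> Q \<Longrightarrow> x j = undefined"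
  unfolding qbasis_def by (auto simp: PiE_def extensional_def)

lemma mem_qbasis: "(\<And>j. j \<notin> Q \<Longrightarrow> x j = undefined) \<Longrightarrow> x \<in> qbasis Q"
  unfolding qbasis_def by (auto simp: PiE_def extensional_def)

lemma mg_qbasis: "u \<in> qbasis Q \<Longrightarrow> w \<in> qbasis Q \<Longrightarrow> mg S u w \<in> qbasis Q"
  by (rule mem_qbasis) (auto simp: mg_def qbasis_undef)

lemma jn_qbasis: "u \<in> qbasis C \<Longrightarrow> v \<in> qbasis (Q - C) \<Longrightarrow> C \<subseteq> Q \<Longrightarrow> jn C u v \<in> qbasis Q"
  by (rule mem_qbasis) (auto simp: jn_def qbasis_undef)

lemma restrict_jn1: "u \<in> qbasis C \<Longrightarrow> restrict (jn C u v) C = u"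
  by (auto simp: jn_def restrict_def qbasis_undef)

lemma restrict_jn2: "v \<in> qbasis (Q - C) \<Longrightarrow> restrict (jn C u v) (Q - C) = v"
proof (rule ext)
  fix j assume "v \<in> qbasis (Q - C)"
  then show "restrict (jn C u v) (Q - C) j = v j"
    by (cases "j \<in> Q - C") (auto simp: jn_def restrict_def qbasis_undef)
qed

lemma restrict_qbasis: "restrict x C \<in> qbasis C"
  by (rule mem_qbasis) auto

lemma jn_restrict: "x \<in> qbasis Q \<Longrightarrow> jn C (restrict x C) (restrict x (Q - C)) = x"
  by (auto simp: jn_def restrict_def qbasis_undef)

lemma sum_qbasis_split:
  assumes "C \<subseteq> Q"
  shows "(\<Sum>x\<in>qbasis Q. f x) = (\<Sum>u\<in>qbasis C. \<Sum>v\<in>qbasis (Q - C). f (jn C u v))"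
proof -
  have b: "bij_betw (\<lambda>(u,v). jn C u v) (qbasis C \<times> qbasis (Q - C)) (qbasis Q)"
  proof (rule bij_betw_byWitness[where f' = "\<lambda>x. (restrict x C, restrict x (Q - C))"])
    show "\<forall>a\<in>qbasis C \<times> qbasis (Q - C). (\<lambda>x. (restrict x C, restrict x (Q - C))) ((\<lambda>(u, v). jn C u v) a) = a"
      by (auto simp: restrict_jn1 restrict_jn2)
    show "\<forall>a'\<in>qbasis Q. (\<lambda>(u, v). jn C u v) (restrict a' C, restrict a' (Q - C)) = a'"
      by (auto simp: jn_restrict)
    show "(\<lambda>(u, v). jn C u v) ` (qbasis C \<times> qbasis (Q - C)) \<subseteq> qbasis Q"
      using assms by (auto intro: jn_qbasis)
    show "(\<lambda>x. (restrict x C, restrict x (Q - C))) ` qbasis Q \<subseteq> qbasis C \<times> qbasis (Q - C)"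
      by (auto simp: restrict_qbasis)
  qed
  have "(\<Sum>x\<in>qbasis Q. f x) = (\<Sum>z\<in>qbasis C \<times> qbasis (Q - C). f ((\<lambda>(u,v). jn C u v) z))"
    using sum.reindex_bij_betw[OF b, of f] by simp
  also have "\<dots> = (\<Sum>u\<in>qbasis C. \<Sum>v\<in>qbasis (Q - C). f (jn C u v))"
    by (simp add: sum.cartesian_product split_def)
  finally show ?thesis .
qed


lemma cs_complex:
  fixes f g :: "'a \<Rightarrow> complex"
  shows "(cmod (\<Sum>i\<in>I. f i * g i))\<^sup>2 \<le> (\<Sum>i\<in>I. (cmod (f i))\<^sup>2) * (\<Sum>i\<in>I. (cmod (g i))\<^sup>2)"
proof -
  have "cmod (\<Sum>i\<in>I. f i * g i) \<le> (\<Sum>i\<in>I. cmod (f i) * cmod (g i))"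
    by (metis (no_types, lifting) norm_mult norm_sum sum.cong)
  then have "(cmod (\<Sum>i\<in>I. f i * g i))\<^sup>2 \<le> (\<Sum>i\<in>I. cmod (f i) * cmod (g i))\<^sup>2"
    by (simp add: power_mono)
  also have "\<dots> \<le> (\<Sum>i\<in>I. (cmod (f i))\<^sup>2) * (\<Sum>i\<in>I. (cmod (g i))\<^sup>2)"
    by (rule Cauchy_Schwarz_ineq_sum)
  finally show ?thesis .
qed

lemma cs_complex2:
  fixes f g :: "'a \<Rightarrow> 'b \<Rightarrow> complex"
  shows "(cmod (\<Sum>s\<in>I. \<Sum>r\<in>J. f s r * g s r))\<^sup>2 \<le> (\<Sum>s\<in>I. \<Sum>r\<in>J. (cmod (f s r))\<^sup>2) * (\<Sum>s\<in>I. \<Sum>r\<in>J. (cmod (g s r))\<^sup>2)"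
  using cs_complex[of "\<lambda>(s,r). f s r" "\<lambda>(s,r). g s r" "I \<times> J"]
  by (simp add: sum.cartesian_product split_def)

lemma cnj_mult_self: "cnj z * z = complex_of_real ((cmod z)\<^sup>2)"
  by (metis complex_norm_square mult.commute of_real_power)

lemma matrix_bound:
  fixes A :: "'a \<Rightarrow> 'b \<Rightarrow> complex" and eps :: real
  assumes fI: "finite I" and fJ: "finite J"
    and unit: "(\<Sum>s\<in>I. \<Sum>r\<in>J. (cmod (A s r))\<^sup>2) = 1"
    and H: "\<And>u v. (cmod (\<Sum>s\<in>I. \<Sum>r\<in>J. cnj (A s r) * u s * v r))\<^sup>2
                \<le> (1 - eps\<^sup>2) * (\<Sum>s\<in>I. (cmod (u s))\<^sup>2) * (\<Sum>r\<in>J. (cmod (v r))\<^sup>2)"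
  shows "\<exists>x. (\<Sum>s\<in>I. \<Sum>r\<in>J. \<Sum>s'\<in>I. \<Sum>r'\<in>J. cnj (A s r) * cnj (A s' r') * A s' r * A s r')
              = complex_of_real x \<and> 0 \<le> x \<and> x \<le> 1 - eps\<^sup>2"
proof -
  define \<rho> where "\<rho> s s' = (\<Sum>r\<in>J. A s r * cnj (A s' r))" for s s'
  have herm: "cnj (\<rho> s s') = \<rho> s' s" for s s'
    unfolding \<rho>_def by (simp add: mult.commute)
  define x where "x = (\<Sum>s\<in>I. \<Sum>s'\<in>I. (cmod (\<rho> s s'))\<^sup>2)"
  have x0: "0 \<le> x" unfolding x_def by (intro sum_nonneg) auto
  have step1: "(\<Sum>s\<in>I. \<Sum>r\<in>J. \<Sum>s'\<in>I. \<Sum>r'\<in>J. cnj (A s r) * cnj (A s' r') * A s' r * A s r')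
      = complex_of_real x"
  proof -
    have "(\<Sum>s\<in>I. \<Sum>r\<in>J. \<Sum>s'\<in>I. \<Sum>r'\<in>J. cnj (A s r) * cnj (A s' r') * A s' r * A s r')
       = (\<Sum>s\<in>I. \<Sum>s'\<in>I. \<Sum>r\<in>J. \<Sum>r'\<in>J. cnj (A s r) * cnj (A s' r') * A s' r * A s r')"
      by (intro sum.cong refl) (rule sum.swap)
    also have "\<dots> = (\<Sum>s\<in>I. \<Sum>s'\<in>I. \<rho> s' s * \<rho> s s')"
      unfolding \<rho>_def sum_product by (intro sum.cong refl) (simp add: ac_simps)
    also have "\<dots> = (\<Sum>s\<in>I. \<Sum>s'\<in>I. complex_of_real ((cmod (\<rho> s s'))\<^sup>2))"
      by (intro sum.cong refl) (metis herm cnj_mult_self)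
    also have "\<dots> = complex_of_real x" unfolding x_def by simp
    finally show ?thesis .
  qed
  obtain s0 r0 where s0: "s0 \<in> I" and r0: "r0 \<in> J" and nz: "A s0 r0 \<noteq> 0"
  proof -
    { assume "\<forall>s\<in>I. \<forall>r\<in>J. A s r = 0"
      then have "(\<Sum>s\<in>I. \<Sum>r\<in>J. (cmod (A s r))\<^sup>2) = 0" by simp
      with unit have False by simp }
    then show ?thesis using that by blast
  qed
  have epsl: "0 < 1 - eps\<^sup>2"
  proof -
    have "(cmod (\<Sum>s\<in>I. \<Sum>r\<in>J. cnj (A s r) * (if s = s0 then 1 else 0) * (if r = r0 then 1 else 0)))\<^sup>2
       \<le> (1 - eps\<^sup>2) * (\<Sum>s\<in>I. (cmod (if s = s0 then 1 else 0::complex))\<^sup>2) * (\<Sum>r\<in>J. (cmod (if r = r0 then 1 else 0::complex))\<^sup>2)"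
      by (rule H)
    moreover have "(\<Sum>s\<in>I. \<Sum>r\<in>J. cnj (A s r) * (if s = s0 then 1 else 0) * (if r = r0 then 1 else 0)) = cnj (A s0 r0)"
    proof -
      have "(\<Sum>s\<in>I. \<Sum>r\<in>J. cnj (A s r) * (if s = s0 then 1 else 0) * (if r = r0 then 1 else 0))
          = (\<Sum>s\<in>I. if s = s0 then (\<Sum>r\<in>J. if r = r0 then cnj (A s0 r) else 0) else 0)"
        by (intro sum.cong refl) (auto intro: sum.cong)
      then show ?thesis using s0 r0 fI fJ by simp
    qed
    moreover have "(\<Sum>s\<in>I. (cmod (if s = s0 then 1 else 0::complex))\<^sup>2) = 1"
      using s0 fI by (subst sum.cong[OF refl, of _ _ "\<lambda>s. if s = s0 then 1 else 0"]) auto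
    moreover have "(\<Sum>r\<in>J. (cmod (if r = r0 then 1 else 0::complex))\<^sup>2) = 1"
      using r0 fJ by (subst sum.cong[OF refl, of _ _ "\<lambda>s. if s = r0 then 1 else 0"]) auto
    ultimately have "(cmod (A s0 r0))\<^sup>2 \<le> 1 - eps\<^sup>2" by simp
    moreover have "0 < (cmod (A s0 r0))\<^sup>2" using nz by simp
    ultimately show ?thesis by linarith
  qed
  have H2: "(\<Sum>r\<in>J. (cmod (\<Sum>s\<in>I. cnj (A s r) * u s))\<^sup>2) \<le> (1 - eps\<^sup>2) * (\<Sum>s\<in>I. (cmod (u s))\<^sup>2)" for u
  proof -
    define w where "w r = (\<Sum>s\<in>I. cnj (A s r) * u s)" for r
    define W where "W = (\<Sum>r\<in>J. (cmod (w r))\<^sup>2)"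
    have W0: "0 \<le> W" unfolding W_def by (intro sum_nonneg) auto
    have "(\<Sum>s\<in>I. \<Sum>r\<in>J. cnj (A s r) * u s * cnj (w r)) = (\<Sum>r\<in>J. w r * cnj (w r))"
      unfolding w_def by (subst sum.swap) (simp add: sum_distrib_right)
    also have "\<dots> = complex_of_real W"
      unfolding W_def by (simp only: of_real_sum) (intro sum.cong refl; metis complex_norm_square of_real_power)
    finally have e: "(\<Sum>s\<in>I. \<Sum>r\<in>J. cnj (A s r) * u s * cnj (w r)) = complex_of_real W" .
    have "(cmod (\<Sum>s\<in>I. \<Sum>r\<in>J. cnj (A s r) * u s * cnj (w r)))\<^sup>2
       \<le> (1 - eps\<^sup>2) * (\<Sum>s\<in>I. (cmod (u s))\<^sup>2) * (\<Sum>r\<in>J. (cmod (cnj (w r)))\<^sup>2)"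
      by (rule H)
    note Hi = this
    then have "W * W \<le> ((1 - eps\<^sup>2) * (\<Sum>s\<in>I. (cmod (u s))\<^sup>2)) * W"
    proof -
      have "(\<Sum>r\<in>J. (cmod (cnj (w r)))\<^sup>2) = W" unfolding W_def by simp
      moreover have "cmod (complex_of_real W) = W" using W0 by simp
      ultimately show ?thesis using Hi unfolding e by (simp add: power2_eq_square)
    qed
    then have "W \<le> (1 - eps\<^sup>2) * (\<Sum>s\<in>I. (cmod (u s))\<^sup>2)"
    proof (cases "W = 0")
      case True
      then show ?thesis using epsl by (simp add: sum_nonneg)
    next
      case False
      with W0 have "0 < W" by simp
      then show ?thesis using \<open>W * W \<le> _\<close> by (simp add: mult_le_cancel_right)
    qed
    then show ?thesis unfolding W_def w_def .
  qed
  define Wf where "Wf r k = (\<Sum>s\<in>I. cnj (A s r) * \<rho> s k)" for r k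
  have step4: "(\<Sum>k\<in>I. \<Sum>r\<in>J. (cmod (Wf r k))\<^sup>2) \<le> (1 - eps\<^sup>2) * x"
  proof -
    have "(\<Sum>k\<in>I. \<Sum>r\<in>J. (cmod (Wf r k))\<^sup>2) \<le> (\<Sum>k\<in>I. (1 - eps\<^sup>2) * (\<Sum>s\<in>I. (cmod (\<rho> s k))\<^sup>2))"
      unfolding Wf_def by (intro sum_mono H2)
    also have "\<dots> = (1 - eps\<^sup>2) * x"
      unfolding x_def sum_distrib_left[symmetric] by (subst sum.swap) simp
    finally show ?thesis .
  qed
  have step5: "complex_of_real x = (\<Sum>k\<in>I. \<Sum>r\<in>J. Wf r k * A k r)"
  proof -
    have "(\<Sum>k\<in>I. \<Sum>r\<in>J. Wf r k * A k r) = (\<Sum>k\<in>I. \<Sum>s\<in>I. \<rho> s k * \<rho> k s)"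
    proof (intro sum.cong refl)
      fix k assume "k \<in> I"
      have "(\<Sum>r\<in>J. Wf r k * A k r) = (\<Sum>r\<in>J. \<Sum>s\<in>I. cnj (A s r) * \<rho> s k * A k r)"
        unfolding Wf_def by (simp add: sum_distrib_right)
      also have "\<dots> = (\<Sum>s\<in>I. \<Sum>r\<in>J. \<rho> s k * (A k r * cnj (A s r)))"
        by (subst sum.swap) (simp add: ac_simps)
      also have "\<dots> = (\<Sum>s\<in>I. \<rho> s k * \<rho> k s)"
        unfolding \<rho>_def by (simp add: sum_distrib_left)
      finally show "(\<Sum>r\<in>J. Wf r k * A k r) = (\<Sum>s\<in>I. \<rho> s k * \<rho> k s)" .
    qed
    also have "\<dots> = (\<Sum>k\<in>I. \<Sum>s\<in>I. complex_of_real ((cmod (\<rho> s k))\<^sup>2))"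
      by (intro sum.cong refl) (metis herm cnj_mult_self mult.commute)
    also have "\<dots> = complex_of_real x"
      unfolding x_def by (subst sum.swap) simp
    finally show ?thesis by simp
  qed
  have "x\<^sup>2 \<le> (\<Sum>k\<in>I. \<Sum>r\<in>J. (cmod (Wf r k))\<^sup>2) * (\<Sum>k\<in>I. \<Sum>r\<in>J. (cmod (A k r))\<^sup>2)"
    using cs_complex2[where f="\<lambda>k r. Wf r k" and g="\<lambda>k r. A k r" and I=I and J=J] step5[symmetric] x0 by simp
  then have "x * x \<le> (1 - eps\<^sup>2) * x" using unit step4 by (simp add: power2_eq_square)
  then have "x \<le> 1 - eps\<^sup>2"
    using x0 epsl by (cases "x = 0") (auto simp: mult_le_cancel_right)
  then show ?thesis using step1 x0 by blast
qed


definition qf :: "nat set \<Rightarrow> nat set \<Rightarrow> ((nat \<Rightarrow> bool) \<Rightarrow> complex) \<Rightarrow> complex" where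
  "qf Q S \<psi> = (\<Sum>x\<in>qbasis Q. \<Sum>y\<in>qbasis Q. cnj (\<psi> x) * cnj (\<psi> y) * \<psi> (mg S x y) * \<psi> (mg S y x))"

lemma restrict_mg: "restrict (mg S x y) C = mg S (restrict x C) (restrict y C)"
  by (rule ext) (auto simp: mg_def restrict_def)

lemma qbasis_eq_out: "x \<in> qbasis C \<Longrightarrow> y \<in> qbasis C \<Longrightarrow> j \<notin> C \<Longrightarrow> x j = y j"
  by (simp add: qbasis_undef)

lemma sum_sq_one: 
  assumes "unit_state C a"
  shows "(\<Sum>x\<in>qbasis C. cnj (a x) * a x) = 1"
proof -
  have "(\<Sum>x\<in>qbasis C. cnj (a x) * a x) = (\<Sum>x\<in>qbasis C. complex_of_real ((cmod (a x))\<^sup>2))"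
    by (simp add: cnj_mult_self)
  also have "\<dots> = complex_of_real (\<Sum>x\<in>qbasis C. (cmod (a x))\<^sup>2)" by simp
  also have "\<dots> = 1" using assms unfolding unit_state_def by simp
  finally show ?thesis .
qed

lemma qf_triv:
  assumes u: "unit_state C a" and triv: "C \<inter> S = {} \<or> C \<subseteq> S"
  shows "qf C S a = 1"
proof -
  have "qf C S a = (\<Sum>x\<in>qbasis C. \<Sum>y\<in>qbasis C. (cnj (a x) * a x) * (cnj (a y) * a y))"
    unfolding qf_def
  proof (intro sum.cong refl)
    fix x y assume x: "x \<in> qbasis C" and y: "y \<in> qbasis C"
    show "cnj (a x) * cnj (a y) * a (mg S x y) * a (mg S y x) = (cnj (a x) * a x) * (cnj (a y) * a y)"
    proof (cases "C \<inter> S = {}")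
      case True
      have "mg S x y = x" "mg S y x = y"
        unfolding mg_def using True qbasis_eq_out[OF x y] by (auto intro!: ext)
      then show ?thesis by (simp add: ac_simps)
    next
      case False
      with triv have "C \<subseteq> S" by simp
      have "mg S x y = y" "mg S y x = x"
        unfolding mg_def using \<open>C \<subseteq> S\<close> qbasis_eq_out[OF x y] by (auto intro!: ext)
      then show ?thesis by (simp add: ac_simps)
    qed
  qed
  also have "\<dots> = (\<Sum>x\<in>qbasis C. cnj (a x) * a x) * (\<Sum>y\<in>qbasis C. cnj (a y) * a y)"
    by (simp add: sum_product)
  also have "\<dots> = 1" using sum_sq_one[OF u] by simp
  finally show ?thesis .
qed

lemma qf_factor:
  assumes "C \<subseteq> Q"
  shows "qf Q S (qtensor C (Q - C) a b) = qf C S a * qf (Q - C) S b"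
proof -
  let ?F = "\<lambda>u u'. cnj (a u) * cnj (a u') * a (mg S u u') * a (mg S u' u)"
  let ?G = "\<lambda>v v'. cnj (b v) * cnj (b v') * b (mg S v v') * b (mg S v' v)"
  have "qf Q S (qtensor C (Q - C) a b) =
     (\<Sum>u\<in>qbasis C. \<Sum>v\<in>qbasis (Q - C). \<Sum>u'\<in>qbasis C. \<Sum>v'\<in>qbasis (Q - C). ?F u u' * ?G v v')"
    unfolding qf_def sum_qbasis_split[OF assms]
  proof (intro sum.cong refl)
    fix u v u' v' assume u: "u \<in> qbasis C" and v: "v \<in> qbasis (Q - C)"
      and u': "u' \<in> qbasis C" and v': "v' \<in> qbasis (Q - C)"
    show "cnj (qtensor C (Q - C) a b (jn C u v)) * cnj (qtensor C (Q - C) a b (jn C u' v')) *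
          qtensor C (Q - C) a b (mg S (jn C u v) (jn C u' v')) *
          qtensor C (Q - C) a b (mg S (jn C u' v') (jn C u v)) = ?F u u' * ?G v v'"
      unfolding qtensor_def restrict_mg
      using u v u' v' by (simp add: restrict_jn1 restrict_jn2[where Q=Q] ac_simps)
  qed
  also have "\<dots> = qf C S a * qf (Q - C) S b"
    unfolding qf_def sum_product by simp
  finally show ?thesis .
qed


lemma unit_norm:
  fixes u :: "'a \<Rightarrow> complex"
  assumes "finite I" and U: "0 < (\<Sum>s\<in>I. (cmod (u s))\<^sup>2)"
  shows "(\<Sum>s\<in>I. (cmod (u s / complex_of_real (sqrt (\<Sum>s\<in>I. (cmod (u s))\<^sup>2))))\<^sup>2) = 1"
proof -
  let ?U = "\<Sum>s\<in>I. (cmod (u s))\<^sup>2"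
  have "(\<Sum>s\<in>I. (cmod (u s / complex_of_real (sqrt ?U)))\<^sup>2) = (\<Sum>s\<in>I. (cmod (u s))\<^sup>2 / ?U)"
    using U by (intro sum.cong refl) (simp add: norm_divide power_divide)
  also have "\<dots> = 1" using U by (simp add: sum_divide_distrib[symmetric])
  finally show ?thesis .
qed

lemma qf_nontriv:
  assumes fin: "finite C" and u: "unit_state C a" and ne: "C \<inter> S \<noteq> {}" and np: "\<not> C \<subseteq> S"
    and far: "far_from_mp C eps a"
  shows "\<exists>x. qf C S a = complex_of_real x \<and> 0 \<le> x \<and> x \<le> 1 - eps\<^sup>2"
proof -
  define D where "D = C \<inter> S"
  have DC: "D \<subseteq> C" unfolding D_def by auto
  define A where "A s r = a (jn D s r)" for s r
  let ?I = "qbasis D" and ?J = "qbasis (C - D)"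
  have fI: "finite ?I" using fin DC by (intro finite_qbasis) (auto intro: finite_subset)
  have fJ: "finite ?J" using fin by (intro finite_qbasis) auto
  have mgjn: "mg S (jn D s r) (jn D s' r') = jn D s' r"
    if "r \<in> ?J" "r' \<in> ?J" for s r s' r'
  proof (rule ext)
    fix j
    show "mg S (jn D s r) (jn D s' r') j = jn D s' r j"
    proof (cases "j \<in> D")
      case True then show ?thesis by (simp add: mg_def jn_def D_def)
    next
      case False
      show ?thesis
      proof (cases "j \<in> S")
        case True
        with False have "j \<notin> C - D" unfolding D_def by auto
        then have "r' j = r j" using qbasis_eq_out[OF that(2,1)] by simp
        then show ?thesis using False True by (simp add: mg_def jn_def)
      next
        case False2: False
        then show ?thesis using False by (simp add: mg_def jn_def)
      qed
    qed
  qed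
  have qf_eq: "qf C S a = (\<Sum>s\<in>?I. \<Sum>r\<in>?J. \<Sum>s'\<in>?I. \<Sum>r'\<in>?J. cnj (A s r) * cnj (A s' r') * A s' r * A s r')"
    unfolding qf_def sum_qbasis_split[OF DC]
    by (intro sum.cong refl) (simp add: A_def mgjn)
  have unitA: "(\<Sum>s\<in>?I. \<Sum>r\<in>?J. (cmod (A s r))\<^sup>2) = 1"
    using u unfolding unit_state_def sum_qbasis_split[OF DC] A_def .
  have H: "(cmod (\<Sum>s\<in>?I. \<Sum>r\<in>?J. cnj (A s r) * uu s * vv r))\<^sup>2
      \<le> (1 - eps\<^sup>2) * (\<Sum>s\<in>?I. (cmod (uu s))\<^sup>2) * (\<Sum>r\<in>?J. (cmod (vv r))\<^sup>2)" for uu vv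
  proof -
    define U where "U = (\<Sum>s\<in>?I. (cmod (uu s))\<^sup>2)"
    define V where "V = (\<Sum>r\<in>?J. (cmod (vv r))\<^sup>2)"
    have U0: "0 \<le> U" "0 \<le> V" unfolding U_def V_def by (auto intro: sum_nonneg)
    show ?thesis
    proof (cases "U = 0 \<or> V = 0")
      case True
      then have "(\<forall>s\<in>?I. uu s = 0) \<or> (\<forall>r\<in>?J. vv r = 0)"
        unfolding U_def V_def using fI fJ by (simp add: sum_nonneg_eq_0_iff)
      then have "(\<Sum>s\<in>?I. \<Sum>r\<in>?J. cnj (A s r) * uu s * vv r) = 0" by auto
      then show ?thesis using True by (auto simp: U_def[symmetric] V_def[symmetric])
    next
      case False
      then have Up: "0 < U" "0 < V" using U0 by auto
      define u' where "u' s = uu s / complex_of_real (sqrt U)" for s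
      define v' where "v' r = vv r / complex_of_real (sqrt V)" for r
      have uu': "unit_state D u'"
        unfolding unit_state_def u'_def U_def using unit_norm[OF fI] Up(1) U_def by simp
      have vv': "unit_state (C - D) v'"
        unfolding unit_state_def v'_def V_def using unit_norm[OF fJ] Up(2) V_def by simp
      define chi where "chi = qtensor D (C - D) u' v'"
      have "unit_state C chi"
      proof -
        have "(\<Sum>x\<in>qbasis C. (cmod (chi x))\<^sup>2) = (\<Sum>s\<in>?I. \<Sum>r\<in>?J. (cmod (u' s))\<^sup>2 * (cmod (v' r))\<^sup>2)"
          unfolding sum_qbasis_split[OF DC] chi_def qtensor_def
          by (intro sum.cong refl) (simp add: restrict_jn1 restrict_jn2[where Q=C] norm_mult power_mult_distrib)
        also have "\<dots> = 1" using uu' vv' unfolding unit_state_def by (simp add: sum_product[symmetric])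
        finally show ?thesis unfolding unit_state_def .
      qed
      moreover have "D \<noteq> {}" "D \<subset> C" using ne np DC unfolding D_def by auto
      ultimately have mp: "mp_product C chi"
        unfolding mp_product_def using uu' vv' chi_def by blast
      have "qinner C a chi = (\<Sum>s\<in>?I. \<Sum>r\<in>?J. cnj (A s r) * uu s * vv r) / complex_of_real (sqrt U * sqrt V)"
        unfolding qinner_def sum_qbasis_split[OF DC] chi_def qtensor_def sum_divide_distrib
        by (intro sum.cong refl) (simp add: restrict_jn1 restrict_jn2[where Q=C] A_def u'_def v'_def)
      then have "(cmod (qinner C a chi))\<^sup>2 = (cmod (\<Sum>s\<in>?I. \<Sum>r\<in>?J. cnj (A s r) * uu s * vv r))\<^sup>2 / (U * V)"
        using U0 by (simp add: norm_divide power_divide real_sqrt_mult[symmetric] abs_mult)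
      moreover have "(cmod (qinner C a chi))\<^sup>2 \<le> 1 - eps\<^sup>2"
        using far mp unfolding far_from_mp_def by blast
      ultimately have "(cmod (\<Sum>s\<in>?I. \<Sum>r\<in>?J. cnj (A s r) * uu s * vv r))\<^sup>2 / (U * V) \<le> 1 - eps\<^sup>2" by simp
      then show ?thesis using Up unfolding U_def[symmetric] V_def[symmetric]
        by (simp add: divide_le_eq mult.assoc)
    qed
  qed
  show ?thesis
    using matrix_bound[OF fI fJ unitA H] qf_eq by simp
qed


definition partner :: "nat \<Rightarrow> nat" where
  "partner c = (if even c then Suc c else c - 1)"

definition sig :: "nat \<Rightarrow> nat set \<Rightarrow> nat set \<Rightarrow> (nat \<Rightarrow> nat \<Rightarrow> bool) \<Rightarrow> (nat \<Rightarrow> nat \<Rightarrow> bool)" where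
  "sig m S T X = (\<lambda>c. if c < 2*m \<and> c div 2 \<in> T then mg S (X c) (X (partner c)) else X c)"

definition PP :: "nat \<Rightarrow> nat set \<Rightarrow> (nat \<Rightarrow> nat \<Rightarrow> bool) \<Rightarrow> (nat \<Rightarrow> nat \<Rightarrow> bool) \<Rightarrow> complex" where
  "PP m S X Y = (\<Sum>T\<in>Pow {..<m}. if Y = sig m S T X then 1 else 0) / 2^m"

lemma partner_lt: "c < 2*m \<Longrightarrow> partner c < 2*m"
  unfolding partner_def by auto

lemma partner_div: "partner c div 2 = c div 2"
  unfolding partner_def by auto presburger

lemma partner_partner: "partner (partner c) = c"
  unfolding partner_def by auto

lemma mg_mg: "mg S (mg S u w) (mg S w u) = u"
  by (rule ext) (simp add: mg_def)

lemma mg_same: "mg S (mg S u w) (mg S w u) = u"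
  by (rule ext) (simp add: mg_def)

lemma sig_comp: "sig m S U (sig m S T X) = sig m S ((U - T) \<union> (T - U)) X"
proof (rule ext)
  fix c
  show "sig m S U (sig m S T X) c = sig m S ((U - T) \<union> (T - U)) X c"
  proof (cases "c < 2*m")
    case True
    then have p: "partner c < 2*m" "partner c div 2 = c div 2" "partner (partner c) = c"
      by (simp_all add: partner_lt partner_div partner_partner)
    show ?thesis
      unfolding sig_def using True p by (auto simp: mg_mg)
  next
    case False
    then show ?thesis unfolding sig_def by simp
  qed
qed

lemma sig_inv: "sig m S T (sig m S T X) = X"
proof -
  have "sig m S T (sig m S T X) = sig m S {} X" by (simp add: sig_comp)
  also have "\<dots> = X" by (simp add: sig_def)
  finally show ?thesis .
qed

lemma sig_in: "X \<in> copies_basis (2*m) Q \<Longrightarrow> sig m S T X \<in> copies_basis (2*m) Q"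
  unfolding copies_basis_def sig_def
  by (auto simp: PiE_def Pi_def extensional_def partner_lt intro!: mg_qbasis)

lemma finite_copies: "finite Q \<Longrightarrow> finite (copies_basis k Q)"
  unfolding copies_basis_def by (intro finite_PiE) (auto simp: finite_qbasis)

lemma sum_symdiff:
  assumes "T \<subseteq> A"
  shows "(\<Sum>U\<in>Pow A. g ((U - T) \<union> (T - U))) = (\<Sum>V\<in>Pow A. g V)"
proof -
  have b: "bij_betw (\<lambda>U. (U - T) \<union> (T - U)) (Pow A) (Pow A)"
    by (rule bij_betw_byWitness[where f' = "\<lambda>U. (U - T) \<union> (T - U)"]) (use assms in auto)
  show ?thesis using sum.reindex_bij_betw[OF b, of g] .
qed

lemma projector_PP:
  assumes "finite Q"
  shows "projector (copies_basis (2*m) Q) (PP m S)"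
  unfolding projector_def
proof (intro conjI ballI)
  let ?K = "copies_basis (2*m) Q"
  fix x y assume "x \<in> ?K" "y \<in> ?K"
  have "(y = sig m S T x) = (x = sig m S T y)" for T
    using sig_inv by metis
  then show "PP m S x y = cnj (PP m S y x)"
    unfolding PP_def by (simp add: cnj_sum if_distrib cong: if_cong)
next
  let ?K = "copies_basis (2*m) Q"
  let ?P = "Pow {..<m::nat}"
  fix x z assume x: "x \<in> ?K" and z: "z \<in> ?K"
  have fK: "finite ?K" using assms by (rule finite_copies)
  have "(\<Sum>y\<in>?K. PP m S x y * PP m S y z) =
     (\<Sum>y\<in>?K. \<Sum>T\<in>?P. (if y = sig m S T x then 1 else 0) * (\<Sum>U\<in>?P. if z = sig m S U y then 1 else 0)) / (2^m * 2^m)"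
  proof -
    have "PP m S x y * PP m S y z = (\<Sum>T\<in>?P. (if y = sig m S T x then 1 else 0) * (\<Sum>U\<in>?P. if z = sig m S U y then 1 else 0)) / (2^m * 2^m)" for y
      unfolding PP_def by (simp add: sum_distrib_right)
    then show ?thesis by (simp add: sum_divide_distrib)
  qed
  also have "\<dots> = (\<Sum>T\<in>?P. \<Sum>y\<in>?K. (if y = sig m S T x then (\<Sum>U\<in>?P. if z = sig m S U y then 1 else 0) else 0)) / (2^m * 2^m)"
    by (subst sum.swap, rule arg_cong[where f="\<lambda>t. t / (2^m*2^m)"], intro sum.cong refl, simp)
  also have "\<dots> = (\<Sum>T\<in>?P. \<Sum>U\<in>?P. if z = sig m S U (sig m S T x) then 1 else 0) / (2^m * 2^m)"
    using fK sig_in[OF x] by (simp add: sum.delta')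
  also have "\<dots> = (\<Sum>T\<in>?P. \<Sum>U\<in>?P. if z = sig m S ((U - T) \<union> (T - U)) x then 1 else 0) / (2^m * 2^m)"
    by (simp add: sig_comp)
  also have "\<dots> = (\<Sum>T\<in>?P. \<Sum>V\<in>?P. if z = sig m S V x then 1 else 0) / (2^m * 2^m)"
    by (rule arg_cong[where f="\<lambda>t. t / (2^m*2^m)"], rule sum.cong[OF refl], rule sum_symdiff[where g = "\<lambda>V. if z = sig m S V x then 1 else 0"], simp)
  also have "\<dots> = PP m S x z"
    unfolding PP_def by (simp add: card_Pow)
  finally show "(\<Sum>y\<in>?K. PP m S x y * PP m S y z) = PP m S x z" .
qed


lemma prod_pairs:
  fixes m :: nat and h :: "nat \<Rightarrow> 'a::comm_monoid_mult"
  shows "(\<Prod>c<2*m. h c) = (\<Prod>i<m. h (2*i) * h (2*i+1))"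
proof (induction m)
  case 0 then show ?case by simp
next
  case (Suc m)
  have "{..<2 * Suc m} = insert (Suc (2*m)) (insert (2*m) {..<2*m})" by auto
  then show ?case using Suc by (simp add: ac_simps)
qed

lemma pair_sum:
  fixes f :: "nat \<Rightarrow> 'a \<Rightarrow> 'a \<Rightarrow> complex"
  assumes fB: "finite B"
  shows "(\<Sum>X\<in>PiE {..<2*m} (\<lambda>_. B). \<Prod>i<m. f i (X (2*i)) (X (2*i+1))) = (\<Prod>i<m. \<Sum>x\<in>B. \<Sum>y\<in>B. f i x y)"
proof -
  let ?K = "PiE {..<2*m} (\<lambda>_. B)"
  let ?Z = "PiE {..<m} (\<lambda>_. B \<times> B)"
  define pr where "pr X = (\<lambda>i\<in>{..<m}. (X (2*i), X (2*i+1)))" for X :: "nat \<Rightarrow> 'a"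
  define iv where "iv Z = (\<lambda>c\<in>{..<2*m}. if even c then fst (Z (c div 2)) else snd (Z (c div 2)))" for Z :: "nat \<Rightarrow> 'a \<times> 'a"
  have b: "bij_betw pr ?K ?Z"
  proof (rule bij_betw_byWitness[where f' = iv])
    show "\<forall>a\<in>?K. iv (pr a) = a"
    proof
      fix X assume X: "X \<in> ?K"
      show "iv (pr X) = X"
      proof (rule ext)
        fix c
        show "iv (pr X) c = X c"
        proof (cases "c < 2*m")
          case True
          then have "c div 2 < m" by auto
          moreover have "2 * (c div 2) = c" if "even c" using that by auto
          moreover have "2 * (c div 2) + 1 = c" if "odd c" using that by presburger
          ultimately show ?thesis using True unfolding iv_def pr_def by auto
        next
          case False
          then show ?thesis using X unfolding iv_def by (auto simp: PiE_def extensional_def)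
        qed
      qed
    qed
    show "\<forall>a'\<in>?Z. pr (iv a') = a'"
    proof
      fix Z assume Z: "Z \<in> ?Z"
      show "pr (iv Z) = Z"
      proof (rule ext)
        fix i
        show "pr (iv Z) i = Z i"
        proof (cases "i < m")
          case True
          then show ?thesis unfolding iv_def pr_def by auto
        next
          case False
          then show ?thesis using Z unfolding pr_def by (auto simp: PiE_def extensional_def)
        qed
      qed
    qed
    show "pr ` ?K \<subseteq> ?Z" unfolding pr_def by (auto simp: PiE_def Pi_def)
    show "iv ` ?Z \<subseteq> ?K"
    proof
      fix X assume "X \<in> iv ` ?Z"
      then obtain Z where Z: "Z \<in> ?Z" and XZ: "X = iv Z" by auto
      have "Z (c div 2) \<in> B \<times> B" if "c < 2*m" for c using Z that by (auto simp: PiE_def Pi_def)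
      then show "X \<in> ?K" unfolding XZ iv_def by (auto simp: PiE_def Pi_def mem_Times_iff)
    qed
  qed
  have "(\<Prod>i<m. \<Sum>x\<in>B. \<Sum>y\<in>B. f i x y) = (\<Prod>i<m. \<Sum>z\<in>B \<times> B. f i (fst z) (snd z))"
    by (simp add: sum.cartesian_product split_def)
  also have "\<dots> = (\<Sum>Z\<in>?Z. \<Prod>i<m. f i (fst (Z i)) (snd (Z i)))"
    by (rule prod_sum_PiE) (use fB in auto)
  also have "\<dots> = (\<Sum>X\<in>?K. \<Prod>i<m. f i (fst (pr X i)) (snd (pr X i)))"
    using sum.reindex_bij_betw[OF b, of "\<lambda>Z. \<Prod>i<m. f i (fst (Z i)) (snd (Z i))"] by simp
  also have "\<dots> = (\<Sum>X\<in>?K. \<Prod>i<m. f i (X (2*i)) (X (2*i+1)))"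
    unfolding pr_def by (intro sum.cong refl prod.cong) auto
  finally show ?thesis by simp
qed


lemma mg_empty: "mg {} u w = u"
  by (simp add: mg_def)

lemma sig_even: "i < m \<Longrightarrow> sig m S T X (2*i) = mg (if i \<in> T then S else {}) (X (2*i)) (X (2*i+1))"
  by (simp add: sig_def partner_def mg_empty)

lemma sig_odd: "i < m \<Longrightarrow> sig m S T X (2*i+1) = mg (if i \<in> T then S else {}) (X (2*i+1)) (X (2*i))"
  by (simp add: sig_def partner_def mg_empty)

lemma outcome:
  assumes fQ: "finite Q" and CQ: "C \<subseteq> Q" and ua: "unit_state C a" and ub: "unit_state (Q - C) b"
  shows "(\<Sum>X\<in>copies_basis (2*m) Q. \<Sum>Y\<in>copies_basis (2*m) Q.
            cnj (tensor_power (2*m) (qtensor C (Q - C) a b) X) * PP m S X Y * tensor_power (2*m) (qtensor C (Q - C) a b) Y)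
         = ((1 + qf Q S (qtensor C (Q - C) a b)) / 2) ^ m"
proof -
  define \<psi> where "\<psi> = qtensor C (Q - C) a b"
  define \<Psi> where "\<Psi> = tensor_power (2*m) \<psi>"
  define K where "K = copies_basis (2*m) Q"
  let ?P = "Pow {..<m::nat}"
  define q where "q = qf Q S \<psi>"
  have fK: "finite K" unfolding K_def using fQ by (rule finite_copies)
  have step1: "(\<Sum>Y\<in>K. cnj (\<Psi> X) * PP m S X Y * \<Psi> Y) = (\<Sum>T\<in>?P. cnj (\<Psi> X) * \<Psi> (sig m S T X)) / 2^m"
    if X: "X \<in> K" for X
  proof -
    have "(\<Sum>Y\<in>K. cnj (\<Psi> X) * PP m S X Y * \<Psi> Y) = (\<Sum>Y\<in>K. \<Sum>T\<in>?P. (if Y = sig m S T X then cnj (\<Psi> X) * \<Psi> Y / 2^m else 0))"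
      unfolding PP_def
    proof (intro sum.cong refl)
      fix Y
      show "cnj (\<Psi> X) * ((\<Sum>T\<in>?P. if Y = sig m S T X then 1 else 0) / 2 ^ m) * \<Psi> Y =
        (\<Sum>T\<in>?P. if Y = sig m S T X then cnj (\<Psi> X) * \<Psi> Y / 2 ^ m else 0)"
        unfolding sum_distrib_left sum_distrib_right sum_divide_distrib by (intro sum.cong refl) simp
    qed
    also have "\<dots> = (\<Sum>T\<in>?P. \<Sum>Y\<in>K. (if Y = sig m S T X then cnj (\<Psi> X) * \<Psi> Y / 2^m else 0))"
      by (rule sum.swap)
    also have "\<dots> = (\<Sum>T\<in>?P. cnj (\<Psi> X) * \<Psi> (sig m S T X) / 2^m)"
      using fK sig_in[of X m Q] X unfolding K_def by (simp add: sum.delta')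
    finally show ?thesis by (simp add: sum_divide_distrib)
  qed
  have q0: "qf Q {} \<psi> = 1"
    unfolding \<psi>_def qf_factor[OF CQ] using qf_triv[OF ua] qf_triv[OF ub] by simp
  have step3: "(\<Sum>X\<in>K. cnj (\<Psi> X) * \<Psi> (sig m S T X)) = q ^ card T" if T: "T \<subseteq> {..<m}" for T
  proof -
    define g where "g i x y = cnj (\<psi> x) * cnj (\<psi> y) * \<psi> (mg (if i \<in> T then S else {}) x y) * \<psi> (mg (if i \<in> T then S else {}) y x)" for i x y
    have "cnj (\<Psi> X) * \<Psi> (sig m S T X) = (\<Prod>i<m. g i (X (2*i)) (X (2*i+1)))" for X
    proof -
      have "cnj (\<Psi> X) * \<Psi> (sig m S T X) = (\<Prod>c<2*m. cnj (\<psi> (X c)) * \<psi> (sig m S T X c))"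
        unfolding \<Psi>_def tensor_power_def by (simp add: cnj_prod prod.distrib)
      also have "\<dots> = (\<Prod>i<m. g i (X (2*i)) (X (2*i+1)))"
        unfolding prod_pairs
      proof (intro prod.cong refl)
        fix i assume "i \<in> {..<m}"
        then have i: "i < m" by simp
        show "cnj (\<psi> (X (2 * i))) * \<psi> (sig m S T X (2 * i)) * (cnj (\<psi> (X (2 * i + 1))) * \<psi> (sig m S T X (2 * i + 1))) =
          g i (X (2 * i)) (X (2 * i + 1))"
          unfolding sig_even[OF i] sig_odd[OF i] g_def by (simp add: ac_simps)
      qed
      finally show ?thesis .
    qed
    then have "(\<Sum>X\<in>K. cnj (\<Psi> X) * \<Psi> (sig m S T X)) = (\<Sum>X\<in>K. \<Prod>i<m. g i (X (2*i)) (X (2*i+1)))"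
      by simp
    also have "\<dots> = (\<Prod>i<m. \<Sum>x\<in>qbasis Q. \<Sum>y\<in>qbasis Q. g i x y)"
      unfolding K_def copies_basis_def by (rule pair_sum) (rule finite_qbasis[OF fQ])
    also have "\<dots> = (\<Prod>i<m. if i \<in> T then q else 1)"
      by (intro prod.cong refl) (simp add: g_def q_def qf_def[symmetric] q0)
    also have "\<dots> = q ^ card T"
      using T by (simp add: prod.If_cases Int_absorb2 Int_commute)
    finally show ?thesis .
  qed
  have "(\<Sum>X\<in>K. \<Sum>Y\<in>K. cnj (\<Psi> X) * PP m S X Y * \<Psi> Y) = (\<Sum>X\<in>K. \<Sum>T\<in>?P. cnj (\<Psi> X) * \<Psi> (sig m S T X)) / 2^m"
    using step1 by (simp add: sum_divide_distrib)
  also have "\<dots> = (\<Sum>T\<in>?P. q ^ card T) / 2^m"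
    by (subst sum.swap) (simp add: step3)
  also have "\<dots> = (1 + q) ^ m / 2^m"
    using prod_add[of "{..<m}" "\<lambda>_. q" "\<lambda>_. 1"] by (simp add: add.commute)
  also have "\<dots> = ((1 + q) / 2) ^ m" by (simp add: power_divide)
  finally show ?thesis unfolding \<Psi>_def \<psi>_def K_def q_def .
qed


lemma qf_info:
  assumes "finite C" "unit_state C a" "C \<inter> S \<noteq> {} \<and> \<not> C \<subseteq> S \<longrightarrow> far_from_mp C eps a"
  shows "\<exists>x. qf C S a = complex_of_real x \<and> 0 \<le> x \<and> x \<le> 1 \<and> (C \<inter> S \<noteq> {} \<and> \<not> C \<subseteq> S \<longrightarrow> x \<le> 1 - eps\<^sup>2)"
proof (cases "C \<inter> S \<noteq> {} \<and> \<not> C \<subseteq> S")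
  case True
  then obtain x where "qf C S a = complex_of_real x" "0 \<le> x" "x \<le> 1 - eps\<^sup>2"
    using qf_nontriv[of C a S eps] assms by blast
  moreover have "x \<le> 1" using \<open>x \<le> 1 - eps\<^sup>2\<close> by (smt (verit) zero_le_power2)
  ultimately show ?thesis by blast
next
  case False
  then have "qf C S a = 1" using qf_triv[OF assms(2)] by blast
  then show ?thesis using False by (intro exI[of _ 1]) auto
qed

theorem proposition2p19:
  fixes n m :: nat and S :: "nat set"
  assumes "m > 0" and "S \<noteq> {}" and "S \<subset> {1..n}"
  shows "\<exists>P. projector (copies_basis (2*m) {1..n}) P \<and>
    (\<forall>C a b (eps::real).
       C \<noteq> {} \<and> C \<subset> {1..n} \<and>
       unit_state C a \<and> unit_state ({1..n} - C) b \<and>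
       far_from_mp C eps a \<and> far_from_mp ({1..n} - C) eps b \<longrightarrow>
       (let psi = qtensor C ({1..n} - C) a b;
            p = outcome_prob (copies_basis (2*m) {1..n}) P (tensor_power (2*m) psi)
        in (S = C \<or> S = {1..n} - C \<longrightarrow> p = 1) \<and>
           (S \<noteq> C \<and> S \<noteq> {1..n} - C \<longrightarrow> p \<le> exp (- (eps\<^sup>2 * real m / 2)))))"
proof (intro exI conjI allI impI)
  let ?Q = "{1..n}"
  show "projector (copies_basis (2*m) ?Q) (PP m S)" by (rule projector_PP) simp
  fix C a b and eps :: real
  assume H: "C \<noteq> {} \<and> C \<subset> ?Q \<and> unit_state C a \<and> unit_state (?Q - C) b \<and>
       far_from_mp C eps a \<and> far_from_mp (?Q - C) eps b"
  then have CQ: "C \<subseteq> ?Q" and ua: "unit_state C a" and ub: "unit_state (?Q - C) b"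
    and fa: "far_from_mp C eps a" and fb: "far_from_mp (?Q - C) eps b" by auto
  have fC: "finite C" using CQ finite_subset by blast
  have fC': "finite (?Q - C)" by simp
  define q where "q = qf ?Q S (qtensor C (?Q - C) a b)"
  have qeq: "q = qf C S a * qf (?Q - C) S b" unfolding q_def by (rule qf_factor[OF CQ])
  have p: "outcome_prob (copies_basis (2*m) ?Q) (PP m S) (tensor_power (2*m) (qtensor C (?Q - C) a b))
      = Re (((1 + q) / 2) ^ m)"
    unfolding outcome_prob_def q_def using outcome[OF _ CQ ua ub, of m S] by simp
  obtain ra where ra: "qf C S a = complex_of_real ra" "0 \<le> ra" "ra \<le> 1"
      "C \<inter> S \<noteq> {} \<and> \<not> C \<subseteq> S \<longrightarrow> ra \<le> 1 - eps\<^sup>2"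
    using qf_info[OF fC ua, of S eps] fa by blast
  obtain rb where rb: "qf (?Q - C) S b = complex_of_real rb" "0 \<le> rb" "rb \<le> 1"
      "(?Q - C) \<inter> S \<noteq> {} \<and> \<not> (?Q - C) \<subseteq> S \<longrightarrow> rb \<le> 1 - eps\<^sup>2"
    using qf_info[OF fC' ub, of S eps] fb by blast
  have pr: "Re (((1 + q) / 2) ^ m) = ((1 + ra * rb) / 2) ^ m"
  proof -
    have "((1 + q) / 2) ^ m = complex_of_real (((1 + ra * rb) / 2) ^ m)"
      using qeq ra(1) rb(1) by simp
    then show ?thesis by simp
  qed
  show "let psi = qtensor C (?Q - C) a b;
            p = outcome_prob (copies_basis (2*m) ?Q) (PP m S) (tensor_power (2*m) psi)
        in (S = C \<or> S = ?Q - C \<longrightarrow> p = 1) \<and>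
           (S \<noteq> C \<and> S \<noteq> ?Q - C \<longrightarrow> p \<le> exp (- (eps\<^sup>2 * real m / 2)))"
    unfolding Let_def p pr
  proof (intro conjI impI)
    assume "S = C \<or> S = ?Q - C"
    then have "qf C S a = 1" "qf (?Q - C) S b = 1"
      using qf_triv[OF ua, of S] qf_triv[OF ub, of S] by auto
    then have "ra = 1" "rb = 1" using ra(1) rb(1) by auto
    then show "((1 + ra * rb) / 2) ^ m = 1" by simp
  next
    assume ne: "S \<noteq> C \<and> S \<noteq> ?Q - C"
    have "(C \<inter> S \<noteq> {} \<and> \<not> C \<subseteq> S) \<or> ((?Q - C) \<inter> S \<noteq> {} \<and> \<not> (?Q - C) \<subseteq> S)"
      using ne assms(2,3) CQ by blast
    then have prod_le: "ra * rb \<le> 1 - eps\<^sup>2"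
    proof
      assume "C \<inter> S \<noteq> {} \<and> \<not> C \<subseteq> S"
      then have "ra \<le> 1 - eps\<^sup>2" using ra(4) by blast
      moreover have "ra * rb \<le> ra" using ra(2) rb(3) by (simp add: mult_left_le)
      ultimately show ?thesis by linarith
    next
      assume "(?Q - C) \<inter> S \<noteq> {} \<and> \<not> (?Q - C) \<subseteq> S"
      then have "rb \<le> 1 - eps\<^sup>2" using rb(4) by blast
      moreover have "ra * rb \<le> rb" using mult_right_mono[OF ra(3) rb(2)] by simp
      ultimately show ?thesis by linarith
    qed
    have b0: "0 \<le> (1 + ra * rb) / 2" using ra(2) rb(2) by simp
    have "(1 + ra * rb) / 2 \<le> 1 + (- (eps\<^sup>2 / 2))" using prod_le by simp
    also have "\<dots> \<le> exp (- (eps\<^sup>2 / 2))" by (rule exp_ge_add_one_self)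
    finally have "((1 + ra * rb) / 2) ^ m \<le> exp (- (eps\<^sup>2 / 2)) ^ m"
      using b0 by (intro power_mono) auto
    also have "\<dots> = exp (real m * (- (eps\<^sup>2 / 2)))" by (rule exp_of_nat_mult[symmetric])
    also have "\<dots> = exp (- (eps\<^sup>2 * real m / 2))" by (simp add: algebra_simps)
    finally show "((1 + ra * rb) / 2) ^ m \<le> exp (- (eps\<^sup>2 * real m / 2))" .
  qed
qed

end
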